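(* Let $N\ge 2$ and $K\ge 1$ be integers, $\mathbf{h}_1,\dots,\mathbf{h}_K\in\mathbb{C}^N$, $\Gamma_1,\dots,\Gamma_K>0$, $\sigma_C^2>0$, $P_T>0$, and set $\mathbf{Q}_k=\mathbf{h}_k\mathbf{h}_k^\dagger$, $\rho_k=1+\Gamma_k^{-1}$. Consider the problem $$\min_{\mathbf{W}_1,\dots,\mathbf{W}_{K+1}}\ \mathrm{tr}\Big(\big(\textstyle\sum_{k=1}^{K+1}\mathbf{W}_k\big)^{-1}\Big)$$ subject to $\rho_k\langle\mathbf{Q}_k,\mathbf{W}_k\rangle-\sum_{i=1}^{K+1}\langle\mathbf{Q}_k,\mathbf{W}_i\rangle\ge\sigma_C^2$ for $k=1,\dots,K$, $\sum_{k=1}^{K+1}\mathrm{tr}(\mathbf{W}_k)\le P_T$, and $\mathbf{W}_k\in\mathbb{H}_+^{N\times N}$ for $k=1,\dots,K+1$, where the objective is $+\infty$ if $\sum_k\mathbf{W}_k$ is singular. Suppose this problem has an optimal solution with finite objective value. Then there exists an optimal solution at which all $K+1$ inequality constraints (the $K$ SINR constraints and the power constraint) hold with equality.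
   Context: $\mathbb{H}_+^{N\times N}$ is the set of $N\times N$ Hermitian positive semidefinite matrices; $\langle\mathbf{A},\mathbf{B}\rangle=\mathrm{tr}(\mathbf{A}^\dagger\mathbf{B})$. *)

theory Defs
  imports "HOL-Analysis.Analysis"
begin

definition adj :: "complex^'n^'n \<Rightarrow> complex^'n^'n" where
  "adj A = (\<chi> i j. cnj (A $ j $ i))"

definition outer :: "complex^'n \<Rightarrow> complex^'n^'n" where
  "outer h = (\<chi> i j. h $ i * cnj (h $ j))"

definition inner_mat :: "complex^'n^'n \<Rightarrow> complex^'n^'n \<Rightarrow> complex" where
  "inner_mat A B = trace (adj A ** B)"

definition hpsd :: "complex^'n^'n \<Rightarrow> bool" where
  "hpsd A \<longleftrightarrow> adj A = A \<and> (\<forall>x::complex^'n. let q = (\<Sum>i\<in>UNIV. cnj (x $ i) * (A *v x) $ i) in 0 \<le> Re q \<and> Im q = 0)"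

definition obj :: "nat \<Rightarrow> (nat \<Rightarrow> complex^'n^'n) \<Rightarrow> ereal" where
  "obj K W = (let S = (\<Sum>k=1..K+1. W k) in
     if invertible S then ereal (Re (trace (matrix_inv S))) else \<infinity>)"

definition feasible ::
  "nat \<Rightarrow> (nat \<Rightarrow> complex^'n) \<Rightarrow> (nat \<Rightarrow> real) \<Rightarrow> real \<Rightarrow> real \<Rightarrow> (nat \<Rightarrow> complex^'n^'n) \<Rightarrow> bool" where
  "feasible K h \<Gamma> \<sigma>2 PT W \<longleftrightarrow>
     (\<forall>k\<in>{1..K}. (1 + 1 / \<Gamma> k) * Re (inner_mat (outer (h k)) (W k))
         - (\<Sum>i=1..K+1. Re (inner_mat (outer (h k)) (W i))) \<ge> \<sigma>2)
   \<and> (\<Sum>k=1..K+1. Re (trace (W k))) \<le> PT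
   \<and> (\<forall>k\<in>{1..K+1}. hpsd (W k))"

definition optimal ::
  "nat \<Rightarrow> (nat \<Rightarrow> complex^'n) \<Rightarrow> (nat \<Rightarrow> real) \<Rightarrow> real \<Rightarrow> real \<Rightarrow> (nat \<Rightarrow> complex^'n^'n) \<Rightarrow> bool" where
  "optimal K h \<Gamma> \<sigma>2 PT W \<longleftrightarrow> feasible K h \<Gamma> \<sigma>2 PT W \<and>
     (\<forall>V. feasible K h \<Gamma> \<sigma>2 PT V \<longrightarrow> obj K W \<le> obj K V)"

end

theory Submission
  imports Defs
begin

lemma scale_comp: "(c *\<^sub>R A)$i$j = of_real c * (A$i$j :: complex)"
  by (simp add: scaleR_conv_of_real[where 'a=complex])

lemma scale_compv: "(c *\<^sub>R x)$i = of_real c * (x$i :: complex)"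
  by (simp add: scaleR_conv_of_real[where 'a=complex])

lemma trace_zero: "trace (0::complex^'n^'n) = 0"
  by (simp add: trace_def)

definition qf :: "complex^'n^'n \<Rightarrow> complex^'n \<Rightarrow> complex" where
  "qf A x = (\<Sum>i\<in>UNIV. cnj (x $ i) * (A *v x) $ i)"

lemma hpsd_qf: "hpsd A \<Longrightarrow> Re (qf A x) \<ge> 0"
  unfolding hpsd_def qf_def Let_def by auto

lemma hpsd_herm: "hpsd A \<Longrightarrow> A$j$i = cnj (A$i$j)"
proof -
  assume "hpsd A"
  hence "adj A = A" unfolding hpsd_def by blast
  hence "A$j$i = adj A $j$i" by simp
  also have "\<dots> = cnj (A$i$j)" by (simp add: adj_def)
  finally show ?thesis .
qed

lemma qf_add: "qf (A+B) x = qf A x + qf B x"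
  unfolding qf_def by (simp add: matrix_vector_mult_add_rdistrib distrib_left sum.distrib)

lemma qf_scale: "qf (c *\<^sub>R A) x = of_real c * qf A x"
  unfolding qf_def by (simp add: matrix_vector_mult_def sum_distrib_left scale_comp mult_ac scaleR_conv_of_real[where 'a=complex])

lemma hpsd_iff_qf: "hpsd A \<longleftrightarrow> adj A = A \<and> (\<forall>x. 0 \<le> Re (qf A x) \<and> Im (qf A x) = 0)"
  unfolding hpsd_def qf_def Let_def by auto

lemma adj_add: "adj (A+B) = adj A + adj B"
  unfolding adj_def by (simp add: vec_eq_iff)
lemma adj_scale: "adj (c *\<^sub>R A) = c *\<^sub>R adj A"
  unfolding adj_def by (simp add: vec_eq_iff scale_comp)

lemma hpsd_add: "hpsd A \<Longrightarrow> hpsd B \<Longrightarrow> hpsd (A+B)"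
  unfolding hpsd_iff_qf by (simp add: adj_add qf_add)

lemma hpsd_scale: "c \<ge> 0 \<Longrightarrow> hpsd A \<Longrightarrow> hpsd (c *\<^sub>R A)"
  unfolding hpsd_iff_qf by (simp add: adj_scale qf_scale)

lemma hpsd_zero: "hpsd (0::complex^'n^'n)"
  unfolding hpsd_iff_qf adj_def qf_def by (simp add: vec_eq_iff)

lemma hpsd_sum: "finite I \<Longrightarrow> (\<forall>i\<in>I. hpsd (f i)) \<Longrightarrow> hpsd (\<Sum>i\<in>I. f i)"
  by (induction I rule: finite_induct) (auto simp: hpsd_zero hpsd_add)

lemma inner_add: "inner_mat Q (A+B) = inner_mat Q A + inner_mat Q B"
  unfolding inner_mat_def by (simp add: matrix_add_ldistrib trace_add)

lemma trace_scale: "trace (c *\<^sub>R (A::complex^'n^'n)) = of_real c * trace A"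
  unfolding trace_def by (simp add: sum_distrib_left scale_comp scaleR_conv_of_real[where 'a=complex])

lemma inner_scale: "inner_mat Q (c *\<^sub>R A) = of_real c * inner_mat Q A"
  unfolding inner_mat_def trace_def matrix_matrix_mult_def by (simp add: sum_distrib_left scale_comp mult_ac scaleR_conv_of_real[where 'a=complex])

lemma inner_zero: "inner_mat Q 0 = 0"
  unfolding inner_mat_def trace_def by (simp add: matrix_matrix_mult_def)

lemma inner_sum: "finite I \<Longrightarrow> inner_mat Q (\<Sum>i\<in>I. f i) = (\<Sum>i\<in>I. inner_mat Q (f i))"
  by (induction I rule: finite_induct) (auto simp: inner_zero inner_add)

lemma trace_sum: "finite I \<Longrightarrow> trace (\<Sum>i\<in>I. f i) = (\<Sum>i\<in>I. trace (f i :: complex^'n^'n))"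
  by (induction I rule: finite_induct) (simp_all add: trace_add trace_zero)

lemma inner_outer: "inner_mat (outer h) A = qf A h"
  unfolding inner_mat_def qf_def trace_def adj_def outer_def
  by (simp add: matrix_matrix_mult_def matrix_vector_mult_def sum_distrib_left mult_ac; subst sum.swap; simp add: mult_ac)

lemma inv_props: "invertible (A::complex^'n^'n) \<Longrightarrow> A ** matrix_inv A = mat 1 \<and> matrix_inv A ** A = mat 1"
  unfolding invertible_def matrix_inv_def by (rule someI_ex)

lemma inv_unique: "(A::complex^'n^'n) ** B = mat 1 \<Longrightarrow> B ** A = mat 1 \<Longrightarrow> matrix_inv A = B"
proof -
  assume a: "A ** B = mat 1" "B ** A = mat 1"
  hence "invertible A" unfolding invertible_def by blast
  then have "matrix_inv A ** A = mat 1" using inv_props by blast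
  have "matrix_inv A = matrix_inv A ** (A ** B)" using a by simp
  also have "\<dots> = (matrix_inv A ** A) ** B" by (simp add: matrix_mul_assoc)
  also have "\<dots> = B" using \<open>matrix_inv A ** A = mat 1\<close> by simp
  finally show ?thesis .
qed

lemma mmul_scale: "(a *\<^sub>R (A::complex^'n^'n)) ** (b *\<^sub>R B) = (a*b) *\<^sub>R (A ** B)"
  by (simp add: vec_eq_iff matrix_matrix_mult_def scale_comp sum_distrib_left mult_ac scaleR_conv_of_real[where 'a=complex])

lemma inv_scale: "c \<noteq> 0 \<Longrightarrow> invertible (S::complex^'n^'n) \<Longrightarrow> matrix_inv (c *\<^sub>R S) = (1/c) *\<^sub>R matrix_inv S"
proof -
  assume c: "c \<noteq> 0" and i: "invertible S"
  have "(c *\<^sub>R S) ** ((1/c) *\<^sub>R matrix_inv S) = mat 1"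
    using inv_props[OF i] c by (simp add: mmul_scale)
  moreover have "((1/c) *\<^sub>R matrix_inv S) ** (c *\<^sub>R S) = mat 1"
    using inv_props[OF i] c by (simp add: mmul_scale)
  ultimately show ?thesis by (rule inv_unique)
qed

lemma axis_mult: "(A *v axis j t)$k = A$k$j * (t::complex)"
  by (simp add: matrix_vector_mult_def axis_def if_distrib cong: if_cong)

lemma sum_axis1: "(\<Sum>k\<in>UNIV. cnj ((axis i a)$k) * (v::complex^'n)$k) = cnj a * v$i"
proof -
  have "(\<Sum>k\<in>UNIV. cnj ((axis i a)$k) * v$k) = (\<Sum>k\<in>UNIV. if k = i then cnj a * v$k else 0)"
    by (rule sum.cong) (auto simp: axis_def)
  thus ?thesis by simp
qed

lemma sum_axis2: "(\<Sum>k\<in>UNIV. cnj ((axis i a + axis j b)$k) * (v::complex^'n)$k) = cnj a * v$i + cnj b * v$j"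
proof -
  have "(\<Sum>k\<in>UNIV. cnj ((axis i a + axis j b)$k) * v$k) = (\<Sum>k\<in>UNIV. cnj ((axis i a)$k) * v$k + cnj ((axis j b)$k) * v$k)"
    by (rule sum.cong) (auto simp: distrib_right)
  thus ?thesis by (simp add: sum.distrib sum_axis1)
qed

lemma qf_axis: "qf A (axis i 1) = A$i$i"
  unfolding qf_def sum_axis1 by (simp add: axis_mult)

lemma qf_two: "qf A (axis i 1 + axis j t) = A$i$i + A$i$j*t + cnj t * A$j$i + cnj t * t * A$j$j"
  unfolding qf_def sum_axis2 by (simp add: matrix_vector_right_distrib axis_mult algebra_simps)

lemma trace_inv_nonneg:
  assumes "hpsd S" "invertible S"
  shows "Re (trace (matrix_inv S)) \<ge> 0"
proof -
  let ?X = "matrix_inv S"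
  have SX: "S ** ?X = mat 1" using inv_props[OF assms(2)] by blast
  have "Re (?X$i$i) \<ge> 0" for i
  proof -
    let ?y = "?X *v axis i 1"
    have "S *v ?y = axis i 1" using SX by (simp add: matrix_vector_mul_assoc)
    hence "qf S ?y = (\<Sum>k\<in>UNIV. cnj (?y $ k) * (axis i 1)$k)"
      unfolding qf_def by simp
    also have "\<dots> = (\<Sum>k\<in>UNIV. if k = i then cnj (?y $ k) else 0)"
      by (rule sum.cong) (auto simp: axis_def)
    finally have "qf S ?y = cnj (?y $ i)" by simp
    moreover have "?y $ i = ?X$i$i" by (simp add: axis_mult)
    ultimately have "Re (?X$i$i) = Re (qf S ?y)" by simp
    thus ?thesis using hpsd_qf[OF assms(1)] by simp
  qed
  thus ?thesis unfolding trace_def by (simp add: Re_sum sum_nonneg)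
qed

lemma psd_zero_diag:
  assumes "hpsd A" "\<forall>i. Re (A$i$i) = 0"
  shows "A = 0"
proof -
  have "A$i$j = 0" for i j
  proof (cases "i = j")
    case True
    have "A$i$i = cnj (A$i$i)" using hpsd_herm[OF assms(1)] by metis
    hence "Im (A$i$i) = 0" by (metis cnj.simps(2) complex.sel(2) complex_cnj_cancel_iff neg_equal_zero)
    with assms(2) True show ?thesis by (simp add: complex_eq_iff)
  next
    case False
    let ?a = "A$i$j"
    have h: "A$j$i = cnj ?a" using hpsd_herm[OF assms(1)] by metis
    have "Re (qf A (axis i 1 + axis j (- cnj ?a))) \<ge> 0" using hpsd_qf[OF assms(1)] by blast
    also have "Re (qf A (axis i 1 + axis j (- cnj ?a))) = - 2 * (cmod ?a)^2"
      unfolding qf_two h using assms(2)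
      by (simp add: algebra_simps complex_mult_cnj power2_eq_square cmod_def)
    finally show ?thesis by simp
  qed
  thus ?thesis by (simp add: vec_eq_iff)
qed


lemma trace_pos:
  assumes "hpsd S" "invertible (S::complex^'n^'n)"
  shows "Re (trace S) > 0"
proof -
  have nn: "Re (S$i$i) \<ge> 0" for i using hpsd_qf[OF assms(1), of "axis i 1"] by (simp add: qf_axis)
  have ge: "Re (trace S) \<ge> 0" unfolding trace_def by (simp add: Re_sum sum_nonneg nn)
  show ?thesis
  proof (rule ccontr)
    assume "\<not> ?thesis"
    hence "(\<Sum>i\<in>UNIV. Re (S$i$i)) = 0" using ge unfolding trace_def by (simp add: Re_sum)
    hence "\<forall>i. Re (S$i$i) = 0" using nn by (simp add: sum_nonneg_eq_0_iff)
    hence "S = 0" using psd_zero_diag[OF assms(1)] by blast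
    with assms(2) obtain B where "(0::complex^'n^'n) ** B = mat 1" unfolding invertible_def by blast
    hence "(0::complex^'n^'n) = mat 1" by (simp add: matrix_matrix_mult_def vec_eq_iff)
    hence "(0::complex^'n^'n) $ i $ i = mat 1 $ i $ i" for i by simp
    from this[of undefined] show False by (simp add: mat_def)
  qed
qed


lemma hpsd_Sum:
  assumes "feasible K h \<Gamma> \<sigma>2 PT W"
  shows "hpsd (\<Sum>k=1..K+1. W k)"
  using assms unfolding feasible_def by (intro hpsd_sum) auto

lemma power_eq: fixes K :: nat shows "(\<Sum>k=1..K+1. Re (trace (W k))) = Re (trace (\<Sum>k=1..K+1. (W k :: complex^'n^'n)))"
  by (simp only: trace_sum[OF finite_atLeastAtMost] Re_sum)

lemma Re_inner_sum: fixes K :: nat shows "(\<Sum>i=1..K+1. Re (inner_mat Q (W i))) = Re (inner_mat Q (\<Sum>i=1..K+1. W i))"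
  by (simp only: inner_sum[OF finite_atLeastAtMost] Re_sum)

lemma obj_cong: "(\<Sum>k=1..K+1. W k) = (\<Sum>k=1..K+1. V k) \<Longrightarrow> obj K W = obj K V"
  unfolding obj_def by simp

lemma step1:
  assumes opt: "optimal K h \<Gamma> \<sigma>2 PT W" and fin: "obj K W < \<infinity>" and s: "\<sigma>2 > 0"
  shows "\<exists>W'. optimal K h \<Gamma> \<sigma>2 PT W' \<and> (\<Sum>k=1..K+1. Re (trace (W' k))) = PT"
proof -
  let ?S = "\<Sum>k=1..K+1. W k"
  have feas: "feasible K h \<Gamma> \<sigma>2 PT W" using opt unfolding optimal_def by blast
  have inv: "invertible ?S" using fin unfolding obj_def Let_def by (auto split: if_splits)
  have hS: "hpsd ?S" by (rule hpsd_Sum[OF feas])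
  define p where "p = Re (trace ?S)"
  have p: "p > 0" unfolding p_def by (rule trace_pos[OF hS inv])
  have pP: "p \<le> PT" using feas unfolding feasible_def p_def power_eq by blast
  define c where "c = PT / p"
  have c: "c \<ge> 1" unfolding c_def using p pP by simp
  define W' where "W' = (\<lambda>k. c *\<^sub>R W k)"
  have sumW': "(\<Sum>k=1..K+1. W' k) = c *\<^sub>R ?S" unfolding W'_def by (simp only: scaleR_sum_right)
  have pw: "(\<Sum>k=1..K+1. Re (trace (W' k))) = PT"
  proof -
    have "(\<Sum>k=1..K+1. Re (trace (W' k))) = Re (trace (c *\<^sub>R ?S))"
      unfolding power_eq sumW' ..
    also have "\<dots> = c * p" unfolding trace_scale p_def by simp
    also have "\<dots> = PT" unfolding c_def using p by simp
    finally show ?thesis .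
  qed
  have feas': "feasible K h \<Gamma> \<sigma>2 PT W'"
    unfolding feasible_def
  proof (intro conjI ballI)
    fix k assume k: "k \<in> {1..K}"
    have old: "(1 + 1 / \<Gamma> k) * Re (inner_mat (outer (h k)) (W k))
         - (\<Sum>i=1..K+1. Re (inner_mat (outer (h k)) (W i))) \<ge> \<sigma>2"
      using feas k unfolding feasible_def by blast
    have "(1 + 1 / \<Gamma> k) * Re (inner_mat (outer (h k)) (W' k))
         - (\<Sum>i=1..K+1. Re (inner_mat (outer (h k)) (W' i)))
        = c * ((1 + 1 / \<Gamma> k) * Re (inner_mat (outer (h k)) (W k))
         - (\<Sum>i=1..K+1. Re (inner_mat (outer (h k)) (W i))))"
      unfolding W'_def inner_scale by (simp add: sum_distrib_left algebra_simps)
    also have "\<dots> \<ge> c * \<sigma>2" using old c by (intro mult_left_mono) auto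
    also have "c * \<sigma>2 \<ge> \<sigma>2" using mult_right_mono[OF c, of \<sigma>2] s by simp
    finally show "(1 + 1 / \<Gamma> k) * Re (inner_mat (outer (h k)) (W' k))
         - (\<Sum>i=1..K+1. Re (inner_mat (outer (h k)) (W' i))) \<ge> \<sigma>2"
      .
  next
    show "(\<Sum>k=1..K+1. Re (trace (W' k))) \<le> PT" using pw by simp
  next
    fix k assume "k \<in> {1..K+1}"
    thus "hpsd (W' k)" using feas c unfolding feasible_def W'_def by (auto intro: hpsd_scale)
  qed
  have tn: "Re (trace (matrix_inv ?S)) \<ge> 0" by (rule trace_inv_nonneg[OF hS inv])
  have "obj K W' = ereal ((1/c) * Re (trace (matrix_inv ?S)))"
    unfolding obj_def Let_def sumW' using inv c
    by (simp add: scalar_invertible inv_scale trace_scale)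
  also have "\<dots> \<le> obj K W"
    unfolding obj_def Let_def using inv c tn mult_left_mono[OF c tn]
    by (simp add: divide_le_eq)
  finally have le: "obj K W' \<le> obj K W" .
  have "optimal K h \<Gamma> \<sigma>2 PT W'"
    unfolding optimal_def using feas' le opt unfolding optimal_def by (meson order_trans)
  thus ?thesis using pw by blast
qed


lemma sum_split_last: fixes K :: nat shows "(\<Sum>k=1..K+1. f k) = (\<Sum>k=1..K. f k) + (f (K+1) :: 'a::comm_monoid_add)"
  by (simp add: add.commute)

lemma step2:
  assumes opt: "optimal K h \<Gamma> \<sigma>2 PT W" and G: "\<forall>k\<in>{1..K}. \<Gamma> k > 0" and s: "\<sigma>2 > 0"
  shows "\<exists>W'. optimal K h \<Gamma> \<sigma>2 PT W'
           \<and> (\<forall>k\<in>{1..K}. (1 + 1 / \<Gamma> k) * Re (inner_mat (outer (h k)) (W' k))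
                 - (\<Sum>i=1..K+1. Re (inner_mat (outer (h k)) (W' i))) = \<sigma>2)
           \<and> (\<Sum>k=1..K+1. Re (trace (W' k))) = (\<Sum>k=1..K+1. Re (trace (W k)))"
proof -
  let ?S = "\<Sum>k=1..K+1. W k"
  have feas: "feasible K h \<Gamma> \<sigma>2 PT W" using opt unfolding optimal_def by blast
  have hS: "hpsd ?S" by (rule hpsd_Sum[OF feas])
  have hW: "\<And>k. k \<in> {1..K+1} \<Longrightarrow> hpsd (W k)" using feas unfolding feasible_def by blast
  define a where "a = (\<lambda>k. Re (inner_mat (outer (h k)) (W k)))"
  define sk where "sk = (\<lambda>k. Re (inner_mat (outer (h k)) ?S))"
  define r where "r = (\<lambda>k. 1 + 1 / \<Gamma> k)"
  define t where "t = (\<lambda>k. (\<sigma>2 + sk k) / (r k * a k))"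
  have con: "r k * a k - sk k \<ge> \<sigma>2" if "k \<in> {1..K}" for k
    using feas that unfolding feasible_def r_def a_def sk_def Re_inner_sum by blast
  have sk0: "sk k \<ge> 0" for k unfolding sk_def inner_outer using hpsd_qf[OF hS] by blast
  have ra: "r k * a k > 0" if "k \<in> {1..K}" for k using con[OF that] sk0[of k] s by linarith
  have t0: "t k \<ge> 0" if "k \<in> {1..K}" for k unfolding t_def using ra[OF that] sk0[of k] s by simp
  have t1: "t k \<le> 1" if "k \<in> {1..K}" for k unfolding t_def using ra[OF that] con[OF that]
    by (simp add: divide_le_eq)
  have teq: "r k * (t k * a k) = \<sigma>2 + sk k" if "k \<in> {1..K}" for k
  proof -
    have ne: "r k * a k \<noteq> 0" using ra[OF that] by (metis order_less_irrefl)
    have "r k * (t k * a k) = (r k * a k) * t k" by (simp only: mult_ac)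
    also have "\<dots> = \<sigma>2 + sk k" unfolding t_def using ne by simp
    finally show ?thesis .
  qed
  define W' where "W' = (\<lambda>k. if k \<in> {1..K} then t k *\<^sub>R W k
      else if k = K+1 then W (K+1) + (\<Sum>j=1..K. (1 - t j) *\<^sub>R W j) else W k)"
  have sumW': "(\<Sum>k=1..K+1. W' k) = ?S"
  proof -
    have A: "(\<Sum>k=1..K. W' k) = (\<Sum>k=1..K. t k *\<^sub>R W k)"
      by (rule sum.cong) (auto simp: W'_def)
    have B: "W' (K+1) = W (K+1) + (\<Sum>j=1..K. (1 - t j) *\<^sub>R W j)" by (simp add: W'_def)
    have C: "(\<Sum>k=1..K. t k *\<^sub>R W k) + (\<Sum>j=1..K. (1 - t j) *\<^sub>R W j) = (\<Sum>k=1..K. W k)"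
      unfolding sum.distrib[symmetric] by (rule sum.cong) (simp_all add: scaleR_left_distrib[symmetric])
    have "(\<Sum>k=1..K+1. W' k) = (\<Sum>k=1..K. t k *\<^sub>R W k) + (W (K+1) + (\<Sum>j=1..K. (1 - t j) *\<^sub>R W j))"
      unfolding sum_split_last A B ..
    also have "\<dots> = ((\<Sum>k=1..K. t k *\<^sub>R W k) + (\<Sum>j=1..K. (1 - t j) *\<^sub>R W j)) + W (K+1)"
      by (simp only: add_ac)
    also have "\<dots> = (\<Sum>k=1..K. W k) + W (K+1)" unfolding C ..
    also have "\<dots> = ?S" by (rule sum_split_last[symmetric])
    finally show ?thesis .
  qed
  have sinr: "r k * Re (inner_mat (outer (h k)) (W' k))
                 - (\<Sum>i=1..K+1. Re (inner_mat (outer (h k)) (W' i))) = \<sigma>2" if k: "k \<in> {1..K}" for k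
  proof -
    have "Re (inner_mat (outer (h k)) (W' k)) = t k * a k"
      using k unfolding W'_def a_def by (simp add: inner_scale)
    moreover have "(\<Sum>i=1..K+1. Re (inner_mat (outer (h k)) (W' i))) = sk k"
      unfolding Re_inner_sum sumW' sk_def ..
    ultimately show ?thesis using teq[OF k] by simp
  qed
  have hW': "hpsd (W' k)" if "k \<in> {1..K+1}" for k
  proof (cases "k \<in> {1..K}")
    case True thus ?thesis unfolding W'_def using t0 hW by (auto intro: hpsd_scale)
  next
    case False
    hence "k = K+1" using that by auto
    moreover have "hpsd (\<Sum>j=1..K. (1 - t j) *\<^sub>R W j)"
      using t1 hW by (intro hpsd_sum) (auto intro: hpsd_scale)
    ultimately show ?thesis unfolding W'_def using hW[of "K+1"] by (auto intro: hpsd_add)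
  qed
  have pw: "(\<Sum>k=1..K+1. Re (trace (W' k))) = (\<Sum>k=1..K+1. Re (trace (W k)))"
    unfolding power_eq sumW' ..
  have feas': "feasible K h \<Gamma> \<sigma>2 PT W'"
    unfolding feasible_def pw using sinr hW' feas unfolding feasible_def r_def by auto
  have "obj K W' = obj K W" by (rule obj_cong[OF sumW'])
  hence "optimal K h \<Gamma> \<sigma>2 PT W'" using opt feas' unfolding optimal_def by simp
  thus ?thesis using sinr pw unfolding r_def by blast
qed

theorem theorem2:
  fixes K :: nat and h :: "nat \<Rightarrow> complex^'n" and \<Gamma> :: "nat \<Rightarrow> real"
    and \<sigma>2 PT :: real
  assumes "CARD('n) \<ge> 2" and "K \<ge> 1"
    and "\<forall>k\<in>{1..K}. \<Gamma> k > 0" and "\<sigma>2 > 0" and "PT > 0"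
    and "\<exists>W. optimal K h \<Gamma> \<sigma>2 PT W \<and> obj K W < \<infinity>"
  shows "\<exists>W. optimal K h \<Gamma> \<sigma>2 PT W
           \<and> (\<forall>k\<in>{1..K}. (1 + 1 / \<Gamma> k) * Re (inner_mat (outer (h k)) (W k))
                 - (\<Sum>i=1..K+1. Re (inner_mat (outer (h k)) (W i))) = \<sigma>2)
           \<and> (\<Sum>k=1..K+1. Re (trace (W k))) = PT"
proof -
  obtain W0 where o: "optimal K h \<Gamma> \<sigma>2 PT W0" "obj K W0 < \<infinity>" using assms(6) by blast
  obtain W1 where o1: "optimal K h \<Gamma> \<sigma>2 PT W1" "(\<Sum>k=1..K+1. Re (trace (W1 k))) = PT"
    using step1[OF o assms(4)] by blast
  obtain W2 where "optimal K h \<Gamma> \<sigma>2 PT W2"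
           "(\<forall>k\<in>{1..K}. (1 + 1 / \<Gamma> k) * Re (inner_mat (outer (h k)) (W2 k))
                 - (\<Sum>i=1..K+1. Re (inner_mat (outer (h k)) (W2 i))) = \<sigma>2)"
           "(\<Sum>k=1..K+1. Re (trace (W2 k))) = (\<Sum>k=1..K+1. Re (trace (W1 k)))"
    using step2[OF o1(1) assms(3) assms(4)] by blast
  thus ?thesis using o1(2) by auto
qed

end
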